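(* For every fixed integer $r\ge1$ and every family $F$ of functions whose codomain has size $k$ and with $\mathrm{opt}_{\mathrm{std}}(F)\le r$, we have $\mathrm{opt}_{\mathrm{amb},r}(F)\le (rk)^{\mathrm{opt}_{\mathrm{std}}(F)}$.
   Context: Let $F$ be a family of functions from $X$ to $Y$. In online learning an adversary secretly fixes $f\in F$ and presents inputs; the learner guesses values of $f$. In the standard model each input is presented singly and after the guess the true value is revealed; $\mathrm{opt}_{\mathrm{std}}(F)$ is the maximum number of incorrect guesses under optimal play by both sides. In the $r$-delayed ambiguous reinforcement model, each round $i$ consists of $r$ inputs $x_{i,1},\dots,x_{i,r}$ given one at a time: the learner must guess $f(x_{i,j})$ before receiving $x_{i,j+1}$; after all $r$ guesses the adversary says YES if all $r$ guesses were correct and NO otherwise. A mistake is a round with answer NO. $\mathrm{opt}_{\mathrm{amb},r}(F)$ is the maximum number of mistakes under optimal play by both learner and adversary (answers consistent with some $f\in F$). *)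

theory Defs
  imports Main "HOL-Library.Extended_Nat"
begin

definition restr :: "('x \<Rightarrow> 'y) set \<Rightarrow> 'x \<Rightarrow> 'y \<Rightarrow> ('x \<Rightarrow> 'y) set" where
  "restr F x y = {f \<in> F. f x = y}"

text \<open>Standard model. std_force F n: starting from the version space F, the adversary
  has a strategy forcing at least n mistakes against every learner (least fixed point,
  i.e. every play following the strategy reaches n mistakes after finitely many rounds).
  In a round the adversary presents x, the learner guesses g, the adversary reveals a
  value y consistent with some remaining function.\<close>
inductive std_force :: "('x \<Rightarrow> 'y) set \<Rightarrow> nat \<Rightarrow> bool" where
  std_zero: "std_force F 0"
| std_step: "(\<And>g. \<exists>y. restr F x y \<noteq> {} \<and>
                 std_force (restr F x y) (if y = g then n else n - 1))
             \<Longrightarrow> std_force F n"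

definition opt_std :: "('x \<Rightarrow> 'y) set \<Rightarrow> enat" where
  "opt_std F = Sup {enat n | n. std_force F n}"

text \<open>r-delayed ambiguous reinforcement model. amb_force r F ps n: the current version
  space is F, the current round has so far consisted of the inputs/guesses ps
  (list of pairs (input, learner's guess)), and the adversary can force at least n
  further mistakes. When the round is complete (length ps = r), the adversary answers
  YES (all guesses correct) or NO (some guess incorrect), consistently with some f in F;
  a NO answer is a mistake.\<close>
definition yes_set :: "('x \<Rightarrow> 'y) set \<Rightarrow> ('x \<times> 'y) list \<Rightarrow> ('x \<Rightarrow> 'y) set" where
  "yes_set F ps = {f \<in> F. \<forall>(x, g) \<in> set ps. f x = g}"

definition no_set :: "('x \<Rightarrow> 'y) set \<Rightarrow> ('x \<times> 'y) list \<Rightarrow> ('x \<Rightarrow> 'y) set" where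
  "no_set F ps = {f \<in> F. \<exists>(x, g) \<in> set ps. f x \<noteq> g}"

inductive amb_force :: "nat \<Rightarrow> ('x \<Rightarrow> 'y) set \<Rightarrow> ('x \<times> 'y) list \<Rightarrow> nat \<Rightarrow> bool"
  for r :: nat where
  amb_zero: "amb_force r F ps 0"
| amb_input: "length ps < r \<Longrightarrow> (\<And>g. amb_force r F (ps @ [(x, g)]) n)
              \<Longrightarrow> amb_force r F ps n"
| amb_yes: "length ps = r \<Longrightarrow> yes_set F ps \<noteq> {} \<Longrightarrow> amb_force r (yes_set F ps) [] n
              \<Longrightarrow> amb_force r F ps n"
| amb_no: "length ps = r \<Longrightarrow> no_set F ps \<noteq> {} \<Longrightarrow> amb_force r (no_set F ps) [] (n - 1)
              \<Longrightarrow> amb_force r F ps n"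

definition opt_amb :: "nat \<Rightarrow> ('x \<Rightarrow> 'y) set \<Rightarrow> enat" where
  "opt_amb r F = Sup {enat n | n. amb_force r F [] n}"

end

theory Submission
  imports Defs
begin

definition lowopt :: "('x \<Rightarrow> 'y) set \<Rightarrow> nat \<Rightarrow> bool" where
  "lowopt G m \<longleftrightarrow> (\<forall>n. std_force G n \<longrightarrow> n \<le> m)"

lemma std_mono: "std_force G n \<Longrightarrow> G \<subseteq> F \<Longrightarrow> std_force F n"
proof (induction G n arbitrary: F rule: std_force.induct)
  case (std_zero F)
  show ?case by (rule std_force.std_zero)
next
  case (std_step F0 x n)
  show ?case
  proof (rule std_force.std_step[where x=x])
    fix g
    obtain y where "restr F0 x y \<noteq> {}" and
      h: "\<And>F'. restr F0 x y \<subseteq> F' \<Longrightarrow> std_force F' (if y = g then n else n - 1)"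
      using std_step.IH[of g] by blast
    moreover have "restr F0 x y \<subseteq> restr F x y" using std_step.prems by (auto simp: restr_def)
    ultimately show "\<exists>y. restr F x y \<noteq> {} \<and> std_force (restr F x y) (if y = g then n else n - 1)"
      by blast
  qed
qed

lemma std_down: "std_force F n \<Longrightarrow> m \<le> n \<Longrightarrow> std_force F m"
proof (induction F n arbitrary: m rule: std_force.induct)
  case (std_zero F)
  then show ?case using std_force.std_zero by simp
next
  case (std_step F x n)
  show ?case
  proof (rule std_force.std_step[where x=x])
    fix g
    obtain y where "restr F x y \<noteq> {}" and
      h: "\<And>m'. m' \<le> (if y = g then n else n - 1) \<Longrightarrow> std_force (restr F x y) m'"
      using std_step.IH[of g] by blast
    moreover have "(if y = g then m else m - 1) \<le> (if y = g then n else n - 1)"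
      using std_step.prems by auto
    ultimately show "\<exists>y. restr F x y \<noteq> {} \<and> std_force (restr F x y) (if y = g then m else m - 1)"
      by blast
  qed
qed

lemma lowopt_subset: "lowopt G m \<Longrightarrow> H \<subseteq> G \<Longrightarrow> lowopt H m"
  unfolding lowopt_def using std_mono by blast

lemma soa:
  assumes "lowopt V m"
  shows "\<exists>g. \<forall>y. y \<noteq> g \<longrightarrow> restr V x y = {} \<or> (1 \<le> m \<and> lowopt (restr V x y) (m - 1))"
proof (rule ccontr)
  assume "\<not> ?thesis"
  then have A: "\<And>g. \<exists>y. y \<noteq> g \<and> restr V x y \<noteq> {} \<and> (m = 0 \<or> \<not> lowopt (restr V x y) (m - 1))"
    by force
  have "std_force V (m + 1)"
  proof (rule std_force.std_step[where x=x])
    fix g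
    obtain y where y: "y \<noteq> g" "restr V x y \<noteq> {}" "m = 0 \<or> \<not> lowopt (restr V x y) (m - 1)"
      using A by blast
    have "std_force (restr V x y) m"
    proof (cases "m = 0")
      case True
      then show ?thesis using std_force.std_zero by simp
    next
      case False
      then obtain n' where "std_force (restr V x y) n'" "n' > m - 1"
        using y(3) unfolding lowopt_def by force
      then show ?thesis using std_down False by (metis Suc_pred' less_eq_Suc_le neq0_conv)
    qed
    then show "\<exists>y. restr V x y \<noteq> {} \<and> std_force (restr V x y) (if y = g then m + 1 else m + 1 - 1)"
      using y by auto
  qed
  then show False using assms unfolding lowopt_def by fastforce
qed

lemma yes_sub: "yes_set F ps \<subseteq> F" by (auto simp: yes_set_def)
lemma no_sub: "no_set F ps \<subseteq> F" by (auto simp: no_set_def)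
lemma no_set_nil: "no_set F [] = {}" by (simp add: no_set_def)

definition inv :: "nat \<Rightarrow> nat \<Rightarrow> ('x \<Rightarrow> 'y) set \<Rightarrow> ('x \<times> 'y) list \<Rightarrow> nat \<Rightarrow> bool" where
  "inv W K F ps P \<longleftrightarrow> (\<exists>L G0 m0 N. F \<subseteq> G0 \<union> \<Union>(fst ` set L) \<and> (\<forall>(G,m)\<in>set L. lowopt G m)
     \<and> lowopt G0 m0 \<and> no_set G0 ps \<subseteq> \<Union>(set N) \<and> length N \<le> length ps * (K - 1)
     \<and> (\<forall>H\<in>set N. H = {} \<or> (1 \<le> m0 \<and> lowopt H (m0 - 1)))
     \<and> sum_list (map (\<lambda>(G,m). W ^ m) L) + W ^ m0 \<le> P)"

lemma invE: assumes "inv W K F ps P"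
  obtains L G0 m0 N where "F \<subseteq> G0 \<union> \<Union>(fst ` set L)" "\<forall>(G,m)\<in>set L. lowopt G m"
     "lowopt G0 m0" "no_set G0 ps \<subseteq> \<Union>(set N)" "length N \<le> length ps * (K - 1)"
     "\<forall>H\<in>set N. H = {} \<or> (1 \<le> m0 \<and> lowopt H (m0 - 1))"
     "sum_list (map (\<lambda>(G,m). W ^ m) L) + W ^ m0 \<le> P"
  using assms unfolding inv_def by (elim exE conjE) blast

lemma arith_aux: "(r::nat) \<ge> 1 \<Longrightarrow> K \<ge> 1 \<Longrightarrow> c \<ge> 1 \<Longrightarrow> l \<le> r * (K - 1) \<Longrightarrow> l * c + 1 \<le> r * K * c"
proof -
  assume a: "r \<ge> 1" "K \<ge> 1" "c \<ge> 1" "l \<le> r * (K - 1)"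
  have "l * c \<le> r * (K - 1) * c" using a by simp
  moreover have "r * K * c = r * (K - 1) * c + r * c" using a
    by (metis add.commute le_add_diff_inverse mult.right_neutral distrib_left distrib_right)
  moreover have "r * c \<ge> 1" using a by simp
  ultimately show ?thesis by linarith
qed

lemma main:
  fixes F :: "('x \<Rightarrow> 'y::finite) set"
  assumes "amb_force r F ps n" "1 \<le> r"
  shows "\<forall>P. inv (r * card (UNIV::'y set)) (card (UNIV::'y set)) F ps P \<longrightarrow> n \<le> P"
  using assms(1)
proof induction
  case (amb_zero F ps)
  then show ?case by simp
next
  case (amb_input ps F x n)
  show ?case
  proof (intro allI impI)
    fix P assume "inv (r * card (UNIV::'y set)) (card (UNIV::'y set)) F ps P"
    then obtain L G0 m0 N where d: "F \<subseteq> G0 \<union> \<Union>(fst ` set L)" "\<forall>(G,m)\<in>set L. lowopt G m"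
      "lowopt G0 m0" "no_set G0 ps \<subseteq> \<Union>(set N)" "length N \<le> length ps * (card (UNIV::'y set) - 1)"
      "\<forall>H\<in>set N. H = {} \<or> (1 \<le> m0 \<and> lowopt H (m0 - 1))"
      "sum_list (map (\<lambda>(G,m). (r * card (UNIV::'y set)) ^ m) L) + (r * card (UNIV::'y set)) ^ m0 \<le> P"
      by (rule invE)
    define V where "V = yes_set G0 ps"
    have lV: "lowopt V m0" using lowopt_subset[OF d(3) yes_sub] unfolding V_def .
    then obtain g where g: "\<forall>y. y \<noteq> g \<longrightarrow> restr V x y = {} \<or> (1 \<le> m0 \<and> lowopt (restr V x y) (m0 - 1))"
      using soa[OF lV, of x] by blast
    obtain ys where ys: "set ys = UNIV - {g}" "distinct ys"
      using finite_distinct_list[of "UNIV - {g} :: 'y set"] by auto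
    have lys: "length ys = card (UNIV::'y set) - 1"
      using ys distinct_card[OF ys(2)] by (simp add: card_Diff_singleton)
    define N' where "N' = N @ map (restr V x) ys"
    have "inv (r * card (UNIV::'y set)) (card (UNIV::'y set)) F (ps @ [(x, g)]) P"
      unfolding inv_def
    proof (intro exI[of _ L] exI[of _ G0] exI[of _ m0] exI[of _ N'] conjI)
      show "no_set G0 (ps @ [(x, g)]) \<subseteq> \<Union> (set N')"
      proof
        fix f assume f: "f \<in> no_set G0 (ps @ [(x, g)])"
        show "f \<in> \<Union> (set N')"
        proof (cases "f \<in> no_set G0 ps")
          case True
          then show ?thesis using d(4) unfolding N'_def by auto
        next
          case False
          then have "f \<in> V" "f x \<noteq> g" using f unfolding V_def no_set_def yes_set_def by auto
          then have "f \<in> restr V x (f x)" "f x \<in> set ys" using ys unfolding restr_def by auto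
          then show ?thesis unfolding N'_def by auto
        qed
      qed
      show "length N' \<le> length (ps @ [(x, g)]) * (card (UNIV::'y set) - 1)"
        using d(5) lys unfolding N'_def by simp
      show "\<forall>H\<in>set N'. H = {} \<or> (1 \<le> m0 \<and> lowopt H (m0 - 1))"
        using d(6) g ys unfolding N'_def by auto
      show "F \<subseteq> G0 \<union> \<Union>(fst ` set L)" by (rule d(1))
      show "\<forall>(G,m)\<in>set L. lowopt G m" by (rule d(2))
      show "lowopt G0 m0" by (rule d(3))
      show "sum_list (map (\<lambda>(G,m). (r * card (UNIV::'y set)) ^ m) L) + (r * card (UNIV::'y set)) ^ m0 \<le> P" by (rule d(7))
    qed
    then show "n \<le> P" using amb_input.IH[of g] by blast
  qed
next
  case (amb_yes ps F n)
  show ?case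
  proof (intro allI impI)
    fix P assume "inv (r * card (UNIV::'y set)) (card (UNIV::'y set)) F ps P"
    then obtain L G0 m0 N where d: "F \<subseteq> G0 \<union> \<Union>(fst ` set L)" "\<forall>(G,m)\<in>set L. lowopt G m"
      "lowopt G0 m0"
      "sum_list (map (\<lambda>(G,m). (r * card (UNIV::'y set)) ^ m) L) + (r * card (UNIV::'y set)) ^ m0 \<le> P"
      by (rule invE)
    have "inv (r * card (UNIV::'y set)) (card (UNIV::'y set)) (yes_set F ps) [] P"
      unfolding inv_def
      apply (rule exI[of _ L], rule exI[of _ G0], rule exI[of _ m0], rule exI[of _ "[]"])
      using order_trans[OF yes_sub d(1)] d(2) d(3) d(4) by (simp add: no_set_nil)
    then show "n \<le> P" using amb_yes.IH by blast
  qed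
next
  case (amb_no ps F n)
  show ?case
  proof (intro allI impI)
    fix P assume "inv (r * card (UNIV::'y set)) (card (UNIV::'y set)) F ps P"
    then obtain L G0 m0 N where d: "F \<subseteq> G0 \<union> \<Union>(fst ` set L)" "\<forall>(G,m)\<in>set L. lowopt G m"
      "lowopt G0 m0" "no_set G0 ps \<subseteq> \<Union>(set N)" "length N \<le> length ps * (card (UNIV::'y set) - 1)"
      "\<forall>H\<in>set N. H = {} \<or> (1 \<le> m0 \<and> lowopt H (m0 - 1))"
      "sum_list (map (\<lambda>(G,m). (r * card (UNIV::'y set)) ^ m) L) + (r * card (UNIV::'y set)) ^ m0 \<le> P"
      by (rule invE)
    define W where "W = r * card (UNIV::'y set)"
    have K1: "card (UNIV::'y set) \<ge> 1" by (simp add: Suc_le_eq finite_UNIV_card_ge_0)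
    have W1: "W \<ge> 1" unfolding W_def using K1 assms(2) by simp
    define N' where "N' = filter (\<lambda>H. H \<noteq> {}) N"
    define Ln where "Ln = L @ map (\<lambda>H. (H, m0 - 1)) N'"
    have cov: "no_set F ps \<subseteq> \<Union>(fst ` set Ln)"
    proof
      fix f assume f: "f \<in> no_set F ps"
      then have "f \<in> F" unfolding no_set_def by auto
      show "f \<in> \<Union>(fst ` set Ln)"
      proof (cases "f \<in> G0")
        case True
        then have "f \<in> no_set G0 ps" using f unfolding no_set_def by auto
        then obtain H where "H \<in> set N" "f \<in> H" using d(4) by auto
        then have "H \<in> set N'" unfolding N'_def by auto
        then show ?thesis using \<open>f \<in> H\<close> unfolding Ln_def by force
      next
        case False
        then show ?thesis using d(1) \<open>f \<in> F\<close> unfolding Ln_def by auto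
      qed
    qed
    then have "Ln \<noteq> []" using amb_no.hyps(2) by auto
    then obtain G1 m1 L1 where Ln: "Ln = (G1, m1) # L1" by (metis list.exhaust prod.exhaust)
    have low: "\<forall>(G,m)\<in>set Ln. lowopt G m"
      using d(2,6) unfolding Ln_def N'_def by auto
    have "inv W (card (UNIV::'y set)) (no_set F ps) [] (sum_list (map (\<lambda>(G,m). W ^ m) Ln))"
      unfolding inv_def
      apply (intro exI[of _ L1] exI[of _ G1] exI[of _ m1] exI[of _ "[]"] conjI)
      using cov low Ln by (auto simp: no_set_def)
    then have n1: "n - 1 \<le> sum_list (map (\<lambda>(G,m). W ^ m) Ln)" using amb_no.IH unfolding W_def by blast
    have sLn: "sum_list (map (\<lambda>(G,m). W ^ m) Ln) = sum_list (map (\<lambda>(G,m). W ^ m) L) + length N' * W ^ (m0 - 1)"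
      unfolding Ln_def by (simp add: comp_def sum_list_triv)
    have "length N' * W ^ (m0 - 1) + 1 \<le> W ^ m0"
    proof (cases "N' = []")
      case True
      then show ?thesis using W1 by simp
    next
      case False
      then obtain H where "H \<in> set N" "H \<noteq> {}" unfolding N'_def
        by (metis (mono_tags, lifting) filter_False)
      then have m0: "1 \<le> m0" using d(6) by auto
      have "length N' \<le> r * (card (UNIV::'y set) - 1)" using d(5) amb_no.hyps(1) unfolding N'_def
        by (metis length_filter_le order_trans)
      then have "length N' * W ^ (m0 - 1) + 1 \<le> r * card (UNIV::'y set) * W ^ (m0 - 1)"
        using arith_aux[of r "card (UNIV::'y set)" "W ^ (m0 - 1)" "length N'"] assms(2) W1 K1 by simp
      also have "\<dots> = W ^ m0" using m0 unfolding W_def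
        by (metis Suc_diff_le diff_Suc_1 power_Suc)
      finally show ?thesis .
    qed
    then show "n \<le> P" using n1 sLn d(7) unfolding W_def by linarith
  qed
qed

theorem mainTheorem10:
  fixes F :: "('x \<Rightarrow> 'y::finite) set" and r k d :: nat
  assumes "r \<ge> 1"
    and "card (UNIV :: 'y set) = k"
    and "opt_std F = enat d"
    and "d \<le> r"
  shows "opt_amb r F \<le> enat ((r * k) ^ d)"
proof -
  have low: "lowopt F d" unfolding lowopt_def
  proof (intro allI impI)
    fix n assume "std_force F n"
    then have "enat n \<le> opt_std F" unfolding opt_std_def by (auto intro: Sup_upper)
    then show "n \<le> d" using assms(3) by simp
  qed
  have "inv (r * card (UNIV::'y set)) (card (UNIV::'y set)) F [] ((r * k) ^ d)"
    unfolding inv_def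
    apply (intro exI[of _ "[]"] exI[of _ F] exI[of _ d] exI[of _ "[]"] conjI)
    using low assms(2) by (auto simp: no_set_def)
  then have "\<And>n. amb_force r F [] n \<Longrightarrow> n \<le> (r * k) ^ d" using main assms(1) by blast
  then show ?thesis unfolding opt_amb_def by (auto intro!: Sup_least)
qed

end
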